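(* Let $G=K(n_1,\dots,n_s)$ be a complete $s$-partite graph ($s\ge 2$) with parts $V_1,\dots,V_s$, $|V_j|=n_j$, $n_1\ge n_2\ge\cdots\ge n_s$, such that $3\le n_1\le 5$ and $n_2=2$. Then there is an optimal $3$-relaxed coloring of $G$ which assigns the same color to three vertices of $V_1$ and both vertices of $V_2$.
   Context: A map $f$ from $V(G)$ to a finite set of colors is a $3$-relaxed coloring if every vertex $u$ has at most $3$ neighbors $v$ with $f(v)=f(u)$; it is optimal if it uses the minimum possible number $\chi_3(G)$ of colors. *)

theory Defs
  imports Main
begin

definition relaxed_coloring :: "nat \<Rightarrow> 'a set \<Rightarrow> ('a \<Rightarrow> 'a \<Rightarrow> bool) \<Rightarrow> ('a \<Rightarrow> nat) \<Rightarrow> bool" where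
  "relaxed_coloring d V adj f \<longleftrightarrow>
     (\<forall>u\<in>V. card {v\<in>V. adj u v \<and> f v = f u} \<le> d)"

definition relaxed_chromatic :: "nat \<Rightarrow> 'a set \<Rightarrow> ('a \<Rightarrow> 'a \<Rightarrow> bool) \<Rightarrow> nat" where
  "relaxed_chromatic d V adj = (LEAST k. \<exists>f. relaxed_coloring d V adj f \<and> card (f ` V) = k)"

definition optimal_relaxed_coloring :: "nat \<Rightarrow> 'a set \<Rightarrow> ('a \<Rightarrow> 'a \<Rightarrow> bool) \<Rightarrow> ('a \<Rightarrow> nat) \<Rightarrow> bool" where
  "optimal_relaxed_coloring d V adj f \<longleftrightarrow>
     relaxed_coloring d V adj f \<and> card (f ` V) = relaxed_chromatic d V adj"

text \<open>Complete multipartite graph K(n 1, ..., n s): vertex (j, i) is the i-th vertex of part V_j,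
  for 1 <= j <= s and i < n j; two vertices are adjacent iff they lie in different parts.\<close>

definition cmp_vertices :: "nat \<Rightarrow> (nat \<Rightarrow> nat) \<Rightarrow> (nat \<times> nat) set" where
  "cmp_vertices s n = {(j, i). 1 \<le> j \<and> j \<le> s \<and> i < n j}"

definition cmp_part :: "(nat \<Rightarrow> nat) \<Rightarrow> nat \<Rightarrow> (nat \<times> nat) set" where
  "cmp_part n j = {(j, i) | i. i < n j}"

definition cmp_adj :: "nat \<times> nat \<Rightarrow> nat \<times> nat \<Rightarrow> bool" where
  "cmp_adj u v \<longleftrightarrow> fst u \<noteq> fst v"

end

theory Submission
  imports Defs
begin

lemma card_fibers:
  assumes "finite S"
  shows "card S = (\<Sum>y\<in>g ` S. card {x\<in>S. g x = y})"
  using sum.image_gen[OF assms, of "\<lambda>_. (1::nat)" g] by simp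

lemma part_card: "card {v \<in> cmp_vertices s n. fst v = j} \<le> n j"
proof -
  have "{v \<in> cmp_vertices s n. fst v = j} \<subseteq> (\<lambda>i. (j,i)) ` {..<n j}"
    by (auto simp: cmp_vertices_def)
  then have "card {v \<in> cmp_vertices s n. fst v = j} \<le> card ((\<lambda>i. (j,i)) ` {..<n j})"
    by (intro card_mono) auto
  also have "\<dots> \<le> n j" using card_image_le[of "{..<n j}" "\<lambda>i. (j,i)"] by simp
  finally show ?thesis .
qed

lemma fin_V: "finite (cmp_vertices s n)"
proof -
  have "cmp_vertices s n = (\<Union>j\<in>{1..s}. (\<lambda>i. (j,i)) ` {..<n j})"
    by (auto simp: cmp_vertices_def)
  then show ?thesis by simp
qed

lemma class_bound:
  assumes "relaxed_coloring 3 V cmp_adj g" "u \<in> V"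
  shows "card {v\<in>V. g v = g u} \<le> card {v\<in>V. g v = g u \<and> fst v = fst u} + 3"
proof -
  have e: "{v\<in>V. g v = g u} = {v\<in>V. g v = g u \<and> fst v = fst u} \<union> {v\<in>V. cmp_adj u v \<and> g v = g u}"
    by (auto simp: cmp_adj_def)
  have "card {v\<in>V. g v = g u} \<le> card {v\<in>V. g v = g u \<and> fst v = fst u} + card {v\<in>V. cmp_adj u v \<and> g v = g u}"
    unfolding e by (rule card_Un_le)
  moreover have "card {v\<in>V. cmp_adj u v \<and> g v = g u} \<le> 3"
    using assms by (auto simp: relaxed_coloring_def)
  ultimately show ?thesis by linarith
qed

lemma lower:
  fixes s :: nat and n :: "nat \<Rightarrow> nat"
  assumes mono: "\<forall>j k. 1 \<le> j \<and> j \<le> k \<and> k \<le> s \<longrightarrow> n k \<le> n j"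
    and n1: "n 1 \<le> 5" and n2: "n 2 = 2"
    and valid: "relaxed_coloring 3 (cmp_vertices s n) cmp_adj g"
  shows "card (cmp_vertices s n) \<le> 4 * card (g ` cmp_vertices s n) + 1"
proof -
  define V where "V = cmp_vertices s n"
  have finV: "finite V" unfolding V_def by (rule fin_V)
  have valid': "relaxed_coloring 3 V cmp_adj g" using valid V_def by simp
  have small: "card {v\<in>V. fst v = j} \<le> 2" if "j \<noteq> 1" for j
  proof (cases "1 \<le> j \<and> j \<le> s")
    case True
    then have "n j \<le> n 2" using mono that by auto
    then show ?thesis using part_card[of s n j] n2 V_def by simp
  next
    case False
    have e: "{v\<in>V. fst v = j} = {}" using False by (auto simp: V_def cmp_vertices_def)
    show ?thesis unfolding e by simp
  qed
  have V1: "card {v\<in>V. fst v = 1} \<le> 5" using part_card[of s n 1] n1 V_def by simp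
  have piece: "card {v\<in>V. g v = c \<and> fst v = j} \<le> card {v\<in>V. fst v = j}" for c j
    by (rule card_mono) (use finV in auto)
  have P1: "card {v\<in>V. g v = c} \<le> 5" for c
  proof (cases "\<exists>w\<in>{v\<in>V. g v = c}. fst w \<noteq> 1")
    case True
    then obtain w where w: "w \<in> V" "g w = c" "fst w \<noteq> 1" by auto
    have "card {v\<in>V. g v = c} \<le> card {v\<in>V. g v = c \<and> fst v = fst w} + 3"
      using class_bound[OF valid' w(1)] w(2) by simp
    moreover have "card {v\<in>V. g v = c \<and> fst v = fst w} \<le> 2"
      using piece[of c "fst w"] small[OF w(3)] by simp
    ultimately show ?thesis by simp
  next
    case False
    then have "{v\<in>V. g v = c} \<subseteq> {v\<in>V. fst v = 1}" by auto
    then have "card {v\<in>V. g v = c} \<le> card {v\<in>V. fst v = 1}"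
      by (rule card_mono[rotated]) (use finV in auto)
    then show ?thesis using V1 by simp
  qed
  have P2: "card {v\<in>V. g v = c \<and> fst v = 1} \<ge> 3" if five: "card {v\<in>V. g v = c} = 5" for c
  proof (rule ccontr)
    assume "\<not> ?thesis"
    then have le2: "card {v\<in>V. g v = c \<and> fst v = 1} \<le> 2" by simp
    define S where "S = {v\<in>V. g v = c}"
    have finS: "finite S" using finV S_def by simp
    have eq2: "card {x\<in>S. fst x = j} = 2" if "j \<in> fst ` S" for j
    proof -
      obtain u where u: "u \<in> S" "fst u = j" using \<open>j \<in> fst ` S\<close> by auto
      have uV: "u \<in> V" "g u = c" using u S_def by auto
      have e: "{x\<in>S. fst x = j} = {v\<in>V. g v = c \<and> fst v = fst u}" using u S_def by auto
      have "card {v\<in>V. g v = c} \<le> card {v\<in>V. g v = c \<and> fst v = fst u} + 3"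
        using class_bound[OF valid' uV(1)] uV(2) by simp
      then have ge: "card {v\<in>V. g v = c \<and> fst v = fst u} \<ge> 2" using five by simp
      have "card {v\<in>V. g v = c \<and> fst v = fst u} \<le> 2"
      proof (cases "fst u = 1")
        case True then show ?thesis using le2 by simp
      next
        case False then show ?thesis using piece[of c "fst u"] small[OF False] by simp
      qed
      then show ?thesis using ge e by simp
    qed
    have "card S = (\<Sum>j\<in>fst ` S. card {x\<in>S. fst x = j})" by (rule card_fibers[OF finS])
    also have "\<dots> = (\<Sum>j\<in>fst ` S. 2)" by (rule sum.cong) (auto simp: eq2)
    also have "\<dots> = 2 * card (fst ` S)" by simp
    finally have "even (card S)" by simp
    then show False using five S_def by simp
  qed
  define C5 where "C5 = {c\<in>g ` V. card {v\<in>V. g v = c} = 5}"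
  have C5le: "card C5 \<le> 1"
  proof (rule ccontr)
    assume "\<not> card C5 \<le> 1"
    then have "card C5 \<ge> 2" by simp
    then obtain c1 where c1: "c1 \<in> C5" by (metis card.empty ex_in_conv not_numeral_le_zero)
    have "card (C5 - {c1}) \<ge> 1" using \<open>card C5 \<ge> 2\<close> c1 by (simp add: card_Diff_singleton_if)
    then obtain c2 where "c2 \<in> C5 - {c1}" by (metis card.empty ex_in_conv not_one_le_zero)
    then have c: "c1 \<in> C5" "c2 \<in> C5" "c1 \<noteq> c2" using c1 by auto
    let ?A = "{v\<in>V. g v = c1 \<and> fst v = 1}"
    let ?B = "{v\<in>V. g v = c2 \<and> fst v = 1}"
    have "card ?A \<ge> 3" "card ?B \<ge> 3" using P2 c C5_def by auto
    moreover have "card (?A \<union> ?B) = card ?A + card ?B"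
      by (rule card_Un_disjoint) (use finV c in auto)
    moreover have "card (?A \<union> ?B) \<le> card {v\<in>V. fst v = 1}"
      by (rule card_mono) (use finV in auto)
    ultimately show False using V1 by simp
  qed
  have "card V = (\<Sum>c\<in>g ` V. card {v\<in>V. g v = c})" by (rule card_fibers[OF finV])
  also have "\<dots> \<le> (\<Sum>c\<in>g ` V. 4 + (if c \<in> C5 then 1 else 0))"
  proof (rule sum_mono)
    fix c assume "c \<in> g ` V"
    then show "card {v\<in>V. g v = c} \<le> 4 + (if c \<in> C5 then 1 else 0)"
      using P1[of c] by (auto simp: C5_def)
  qed
  also have "\<dots> = 4 * card (g ` V) + card C5"
    by (simp add: sum.distrib C5_def sum.If_cases finV Int_def)
  finally show ?thesis using C5le V_def by simp
qed

theorem lemma5p4: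
  fixes s :: nat and n :: "nat \<Rightarrow> nat"
  assumes "s \<ge> 2"
    and "\<forall>j. 1 \<le> j \<and> j \<le> s \<longrightarrow> n j \<ge> 1"
    and "\<forall>j k. 1 \<le> j \<and> j \<le> k \<and> k \<le> s \<longrightarrow> n k \<le> n j"
    and "3 \<le> n 1" and "n 1 \<le> 5" and "n 2 = 2"
  shows "\<exists>f. optimal_relaxed_coloring 3 (cmp_vertices s n) cmp_adj f \<and>
           (\<exists>a b c. a \<in> cmp_part n 1 \<and> b \<in> cmp_part n 1 \<and> c \<in> cmp_part n 1 \<and>
              a \<noteq> b \<and> a \<noteq> c \<and> b \<noteq> c \<and>
              f a = f b \<and> f b = f c \<and> (\<forall>v\<in>cmp_part n 2. f v = f a))"
proof -
  define V where "V = cmp_vertices s n"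
  define A where "A = {(1::nat,0::nat),(1,1),(1,2)}"
  define B where "B = {(2::nat,0::nat),(2,1)}"
  define R where "R = V - (A \<union> B)"
  define N where "N = card V"
  have finV: "finite V" unfolding V_def by (rule fin_V)
  have AV: "A \<subseteq> V" using assms unfolding A_def V_def cmp_vertices_def by auto
  have BV: "B \<subseteq> V" using assms unfolding B_def V_def cmp_vertices_def by auto
  have cA: "card A = 3" unfolding A_def by simp
  have cB: "card B = 2" unfolding B_def by simp
  have cAB: "card (A \<union> B) = 5" unfolding A_def B_def by simp
  have finR: "finite R" using finV R_def by simp
  have cR: "card R = N - 5" unfolding R_def N_def using cAB AV BV finV
    by (metis Un_least card_Diff_subset finite_subset)
  have N5: "N \<ge> 5" unfolding N_def using cAB AV BV finV
    by (metis Un_least card_mono)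
  obtain h where h: "bij_betw h R {0..<card R}" using ex_bij_betw_finite_nat[OF finR] by blast
  have hinj: "inj_on h R" and hR: "\<And>v. v \<in> R \<Longrightarrow> h v < N - 5"
    using h cR unfolding bij_betw_def by auto
  define f where "f v = (if v \<in> A \<union> B then 0 else h v div 4 + 1)" for v
  have fvalid: "relaxed_coloring 3 V cmp_adj f"
    unfolding relaxed_coloring_def
  proof
    fix u assume uV: "u \<in> V"
    show "card {v\<in>V. cmp_adj u v \<and> f v = f u} \<le> 3"
    proof (cases "u \<in> A")
      case True
      have "{v\<in>V. cmp_adj u v \<and> f v = f u} \<subseteq> B"
        using True unfolding f_def cmp_adj_def A_def B_def by auto
      then have "card {v\<in>V. cmp_adj u v \<and> f v = f u} \<le> card B"
        by (rule card_mono[rotated]) (simp add: B_def)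
      then show ?thesis using cB by simp
    next
      case nA: False
      show ?thesis
      proof (cases "u \<in> B")
        case True
        have "{v\<in>V. cmp_adj u v \<and> f v = f u} \<subseteq> A"
          using True unfolding f_def cmp_adj_def A_def B_def by auto
        then have "card {v\<in>V. cmp_adj u v \<and> f v = f u} \<le> card A"
          by (rule card_mono[rotated]) (simp add: A_def)
        then show ?thesis using cA by simp
      next
        case False
        then have uR: "u \<in> R" using nA uV R_def by auto
        define d where "d = h u div 4"
        define C where "C = {v\<in>R. h v div 4 = d}"
        have "{v\<in>V. cmp_adj u v \<and> f v = f u} \<subseteq> C - {u}"
          using uR unfolding C_def R_def f_def cmp_adj_def d_def by (auto split: if_splits)
        moreover have "card C \<le> 4"
        proof -
          have "card C \<le> card {4*d..<4*d+4}"
            by (rule card_inj_on_le[of h]) (use hinj in \<open>auto simp: C_def intro: inj_on_subset\<close>)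
          then show ?thesis by simp
        qed
        moreover have "u \<in> C" using uR C_def d_def by simp
        moreover have "finite C" using finR C_def by simp
        ultimately have "card {v\<in>V. cmp_adj u v \<and> f v = f u} \<le> card (C - {u})"
          and "card (C - {u}) \<le> 3"
          by (meson card_mono finite_Diff, simp add: card_Diff_singleton)
        then show ?thesis by linarith
      qed
    qed
  qed
  have fimg: "f ` V \<subseteq> {0..<(N+2) div 4}"
  proof
    fix x assume "x \<in> f ` V"
    then obtain v where v: "v \<in> V" "x = f v" by auto
    show "x \<in> {0..<(N+2) div 4}"
    proof (cases "v \<in> A \<union> B")
      case True then show ?thesis using v N5 f_def by auto
    next
      case False
      then have "h v < N - 5" using hR v R_def by auto
      then have "h v div 4 + 1 < (N+2) div 4" by linarith
      then show ?thesis using v False f_def by auto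
    qed
  qed
  have fcard: "card (f ` V) \<le> (N+2) div 4"
    using card_mono[OF _ fimg] by simp
  have opt: "card (f ` V) = relaxed_chromatic 3 V cmp_adj"
    unfolding relaxed_chromatic_def
  proof (rule Least_equality[symmetric])
    show "\<exists>g. relaxed_coloring 3 V cmp_adj g \<and> card (g ` V) = card (f ` V)"
      using fvalid by blast
  next
    fix y assume "\<exists>g. relaxed_coloring 3 V cmp_adj g \<and> card (g ` V) = y"
    then obtain g where g: "relaxed_coloring 3 V cmp_adj g" "card (g ` V) = y" by blast
    have "N \<le> 4 * y + 1" using lower[of s n g] assms g V_def N_def by simp
    then have "(N+2) div 4 \<le> y" by linarith
    then show "card (f ` V) \<le> y" using fcard by simp
  qed
  have p1: "(1,i) \<in> cmp_part n 1" if "i < 3" for i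
    using that assms unfolding cmp_part_def by auto
  have p2: "cmp_part n 2 = B" using assms unfolding cmp_part_def B_def by auto
  show ?thesis
    unfolding optimal_relaxed_coloring_def V_def[symmetric]
    apply (rule exI[of _ f])
    apply (intro conjI fvalid opt)
    apply (rule exI[of _ "(1,0)"], rule exI[of _ "(1,1)"], rule exI[of _ "(1,2)"])
    using p1 p2 by (auto simp: f_def A_def B_def)
qed

end
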